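(* Let $b\ge3$, $D$, $C(b,D)$, $\gamma$, $A$, $I$, $\psi$, $\psi_A$, $\mu$, $r_0$, $LS_i^{\ast}$ be as in the context, and suppose $\psi_{A}(i) \leq b^{-i}/2$ for all $i\in I$. Let $B$ be an open ball centered at a point of $C(b,D)$ with radius $r(B) < r_0/2$, and put $LS_i^{\ast}(B) = B \cap LS_i^{\ast}$. Let $t_{0}$ be a sufficiently large integer satisfying $b^{-t_{0}} < r(B)$. Then there exists a constant $K>0$ such that for all $i, j \in I$ with $i>j>t_{0}$, $$\mu(LS_{i}^{\ast}(B) \cap LS_{j}^{\ast}(B)) \leq \frac{K}{\mu(B)}\, \mu(LS_{i}^{\ast}(B))\, \mu(LS_{j}^{\ast}(B)).$$
   Context: $b\ge3$ is an integer, $D\subset\{0,\ldots,b-1\}$ with $2\le\#D\le b-1$, $C(b,D)$ is the set of $x\in[0,1]$ whose base-$b$ expansion uses only digits from $D$, and $\gamma = \log\#D/\log b$. $\mu = \mathcal{H}^{\gamma}|_{C(b,D)}$ (the $\gamma$-dimensional Hausdorff measure restricted to $C(b,D)$), and $r_0>0$ is a constant such that $\mu(B(x,r)) \asymp r^{\gamma}$ (bounded above and below by constant multiples) for all $x\in C(b,D)$ and $0<r<r_0$. $B(x,r)$ denotes the open interval $(x-r,x+r)$, and a ball with non-positive radius is empty. $A=(a_n)_{n\ge1}$ is an unbounded non-decreasing sequence of positive integers, $\psi:\mathbb{N}\to(0,\infty)$, $I=\{i : a_n=i \text{ for some } n\}$, and $\psi_A(i)=\max\{\psi(n) : a_n=i\}$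 for $i\in I$. The $n$-th level $C_n(b,D) = \{\sum_{k\ge1}x_kb^{-k}\in[0,1] : x_k\in D, k=1,\ldots,n\}$ is a union of $(\#D)^n$ intervals of length $b^{-n}$, and $L_n$ is the set of their left endpoints. $m_l=\min D$, $d_{l,i} = m_l/((b-1)b^i)$. For $i\ge1$, $L_i^{\ast} = \{ p/b^i \in L_i : p/b^i + d_{l,i} \ne q/b^j + d_{l,j} \text{ for every integer } q \text{ and every } j<i\}$, and for $i\in I$, $LS_i^{\ast} = \bigcup_{p/b^i \in L_i^{\ast}} B\left(p/b^i + d_{l,i},\ \psi_A(i) - d_{l,i}\right)$. *)

theory Defs
  imports "HOL-Analysis.Analysis"
begin

definition hausdorff_pre :: "real \<Rightarrow> real \<Rightarrow> real set \<Rightarrow> ennreal" where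
  "hausdorff_pre s \<delta> E =
     (INF U \<in> {U :: nat \<Rightarrow> real set. E \<subseteq> (\<Union>n. U n) \<and>
                 (\<forall>n. bounded (U n) \<and> diameter (U n) \<le> \<delta>)}.
        (\<Sum>n. ennreal (diameter (U n) powr s)))"

definition hausdorff_measure :: "real \<Rightarrow> real set \<Rightarrow> ennreal" where
  "hausdorff_measure s E = (SUP \<delta> \<in> {0<..}. hausdorff_pre s \<delta> E)"

definition cantor_set :: "nat \<Rightarrow> nat set \<Rightarrow> real set" where
  "cantor_set b D = {(\<Sum>k. real (x k) / real b ^ Suc k) | x. \<forall>k. x k \<in> D}"

definition left_ends :: "nat \<Rightarrow> nat set \<Rightarrow> nat \<Rightarrow> real set" where
  "left_ends b D n = {(\<Sum>k=1..n. real (x k) / real b ^ k) | x. \<forall>k\<in>{1..n}. x k \<in> D}"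

definition dl :: "nat \<Rightarrow> nat set \<Rightarrow> nat \<Rightarrow> real" where
  "dl b D i = real (Min D) / ((real b - 1) * real b ^ i)"

definition left_ends_star :: "nat \<Rightarrow> nat set \<Rightarrow> nat \<Rightarrow> real set" where
  "left_ends_star b D i = {y \<in> left_ends b D i.
      \<forall>(q::int) j. 1 \<le> j \<and> j < i \<longrightarrow> y + dl b D i \<noteq> real_of_int q / real b ^ j + dl b D j}"

definition psiA :: "(nat \<Rightarrow> nat) \<Rightarrow> (nat \<Rightarrow> real) \<Rightarrow> nat \<Rightarrow> real" where
  "psiA a \<psi> i = Max (\<psi> ` {n. 1 \<le> n \<and> a n = i})"

definition LS_star :: "nat \<Rightarrow> nat set \<Rightarrow> (nat \<Rightarrow> nat) \<Rightarrow> (nat \<Rightarrow> real) \<Rightarrow> nat \<Rightarrow> real set" where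
  "LS_star b D a \<psi> i = (\<Union>y \<in> left_ends_star b D i. ball (y + dl b D i) (psiA a \<psi> i - dl b D i))"

end

theory Submission
  imports Defs
begin


lemma hp_mono: "A \<subseteq> B \<Longrightarrow> hausdorff_pre s \<delta> A \<le> hausdorff_pre s \<delta> B"
  unfolding hausdorff_pre_def by (rule INF_superset_mono) auto

lemma hm_mono: "A \<subseteq> B \<Longrightarrow> hausdorff_measure s A \<le> hausdorff_measure s B"
  unfolding hausdorff_measure_def by (rule SUP_mono) (auto intro: hp_mono)

lemma INF_add_INF_ennreal:
  fixes f g :: "'a \<Rightarrow> ennreal"
  assumes "\<And>a b. a \<in> SA \<Longrightarrow> b \<in> SB \<Longrightarrow> X \<le> f a + g b"
  shows "X \<le> (INF a\<in>SA. f a) + (INF b\<in>SB. g b)"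
proof (cases "SA = {} \<or> SB = {}")
  case True then show ?thesis by auto
next
  case False
  have c: "continuous (at_right x) (\<lambda>y::ennreal. y + c)" for x c
    using continuous_add[of "at_right x" "\<lambda>x. x" "\<lambda>x. c"] by auto
  have c2: "continuous (at_right x) (\<lambda>y::ennreal. c + y)" for x c
    using continuous_add[of "at_right x" "\<lambda>x. c" "\<lambda>x. x"] by auto
  have e1: "(INF a\<in>SA. f a) + (INF b\<in>SB. g b) = (INF a\<in>SA. f a + (INF b\<in>SB. g b))"
    using continuous_at_Inf_mono[of "\<lambda>y. y + (INF b\<in>SB. g b)" "f ` SA"] c False
    by (auto simp: mono_def image_comp add_right_mono)
  have e2: "f a + (INF b\<in>SB. g b) = (INF b\<in>SB. f a + g b)" for a
    using continuous_at_Inf_mono[of "\<lambda>y. f a + y" "g ` SB"] c2 False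
    by (auto simp: mono_def image_comp add_left_mono)
  show ?thesis unfolding e1 e2 using assms by (auto intro!: INF_greatest)
qed

lemma sum_interleave:
  fixes U V :: "nat \<Rightarrow> ennreal"
  shows "(\<Sum>n. if even n then U (n div 2) else V (n div 2)) = (\<Sum>n. U n) + (\<Sum>n. V n)"
proof -
  let ?W = "\<lambda>n. if even n then U (n div 2) else V (n div 2)"
  have "(\<lambda>n. sum ?W {n * 2 ..< n * 2 + 2}) sums (\<Sum>n. ?W n)"
    by (rule sums_group) (auto intro: summable_sums)
  moreover have "sum ?W {n * 2 ..< n * 2 + 2} = U n + V n" for n
  proof -
    have "{n * 2 ..< n * 2 + 2} = {2*n, Suc (2*n)}" by auto
    then show ?thesis by simp
  qed
  ultimately have "(\<lambda>n. U n + V n) sums (\<Sum>n. ?W n)" by simp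
  then have "(\<Sum>n. ?W n) = (\<Sum>n. U n + V n)" by (simp add: sums_unique)
  also have "\<dots> = (\<Sum>n. U n) + (\<Sum>n. V n)" by (rule suminf_add[symmetric]) auto
  finally show ?thesis .
qed

lemma hp_union:
  assumes "0 \<le> \<delta>"
  shows "hausdorff_pre s \<delta> (A \<union> B) \<le> hausdorff_pre s \<delta> A + hausdorff_pre s \<delta> B"
  unfolding hausdorff_pre_def
proof (rule INF_add_INF_ennreal)
  fix U V assume U: "U \<in> {U :: nat \<Rightarrow> real set. A \<subseteq> (\<Union>n. U n) \<and> (\<forall>n. bounded (U n) \<and> diameter (U n) \<le> \<delta>)}"
    and V: "V \<in> {U :: nat \<Rightarrow> real set. B \<subseteq> (\<Union>n. U n) \<and> (\<forall>n. bounded (U n) \<and> diameter (U n) \<le> \<delta>)}"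
  define W where "W = (\<lambda>n. if even n then U (n div 2) else V (n div 2))"
  have Wc: "W \<in> {U :: nat \<Rightarrow> real set. A \<union> B \<subseteq> (\<Union>n. U n) \<and> (\<forall>n. bounded (U n) \<and> diameter (U n) \<le> \<delta>)}"
  proof -
    have "A \<subseteq> (\<Union>n. W n)"
    proof
      fix x assume "x \<in> A" then obtain n where "x \<in> U n" using U by auto
      then have "x \<in> W (2*n)" by (simp add: W_def)
      then show "x \<in> (\<Union>n. W n)" by blast
    qed
    moreover have "B \<subseteq> (\<Union>n. W n)"
    proof
      fix x assume "x \<in> B" then obtain n where "x \<in> V n" using V by auto
      then have "x \<in> W (Suc (2*n))" by (simp add: W_def)
      then show "x \<in> (\<Union>n. W n)" by blast
    qed
    moreover have "bounded (W n) \<and> diameter (W n) \<le> \<delta>" for n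
      using U V by (auto simp: W_def)
    ultimately show ?thesis by auto
  qed
  have "(\<Sum>n. ennreal (diameter (W n) powr s)) = (\<Sum>n. ennreal (diameter (U n) powr s)) + (\<Sum>n. ennreal (diameter (V n) powr s))"
    using sum_interleave[of "\<lambda>n. ennreal (diameter (U n) powr s)" "\<lambda>n. ennreal (diameter (V n) powr s)"]
    unfolding W_def by (smt (verit, ccfv_SIG) suminf_cong)
  then show "(INF U\<in>{U :: nat \<Rightarrow> real set. A \<union> B \<subseteq> (\<Union>n. U n) \<and> (\<forall>n. bounded (U n) \<and> diameter (U n) \<le> \<delta>)}.
        (\<Sum>n. ennreal (diameter (U n) powr s))) \<le> (\<Sum>n. ennreal (diameter (U n) powr s)) + (\<Sum>n. ennreal (diameter (V n) powr s))"
    using Wc by (metis (no_types, lifting) INF_lower)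
qed

lemma hm_union: "hausdorff_measure s (A \<union> B) \<le> hausdorff_measure s A + hausdorff_measure s B"
  unfolding hausdorff_measure_def
proof (rule SUP_least)
  fix \<delta> :: real assume "\<delta> \<in> {0<..}"
  then have "hausdorff_pre s \<delta> (A \<union> B) \<le> hausdorff_pre s \<delta> A + hausdorff_pre s \<delta> B"
    by (intro hp_union) auto
  also have "\<dots> \<le> (SUP \<delta>\<in>{0<..}. hausdorff_pre s \<delta> A) + (SUP \<delta>\<in>{0<..}. hausdorff_pre s \<delta> B)"
    using \<open>\<delta> \<in> {0<..}\<close> by (intro add_mono SUP_upper)
  finally show "hausdorff_pre s \<delta> (A \<union> B) \<le> (SUP \<delta>\<in>{0<..}. hausdorff_pre s \<delta> A) + (SUP \<delta>\<in>{0<..}. hausdorff_pre s \<delta> B)" .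
qed

lemma hm_UN_le:
  assumes "finite S"
  shows "hausdorff_measure s (\<Union>c\<in>S. A c) \<le> (\<Sum>c\<in>S. hausdorff_measure s (A c))"
  using assms
proof (induction S rule: finite_induct)
  case empty
  have "hausdorff_measure s {} \<le> 0"
  proof -
    have "hausdorff_pre s \<delta> {} \<le> 0" if "\<delta> > 0" for \<delta>
    proof -
      have "(\<lambda>n. {}) \<in> {U :: nat \<Rightarrow> real set. {} \<subseteq> (\<Union>n. U n) \<and> (\<forall>n. bounded (U n) \<and> diameter (U n) \<le> \<delta>)}"
        using that by auto
      then show ?thesis unfolding hausdorff_pre_def
        by (rule INF_lower2) simp
    qed
    then show ?thesis unfolding hausdorff_measure_def by (auto intro!: SUP_least)
  qed
  then show ?case by simp
next
  case (insert x F)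
  have "hausdorff_measure s (\<Union>c\<in>insert x F. A c) = hausdorff_measure s (A x \<union> (\<Union>c\<in>F. A c))" by simp
  also have "\<dots> \<le> hausdorff_measure s (A x) + hausdorff_measure s (\<Union>c\<in>F. A c)" by (rule hm_union)
  also have "\<dots> \<le> hausdorff_measure s (A x) + (\<Sum>c\<in>F. hausdorff_measure s (A c))"
    using insert by (intro add_left_mono) auto
  finally show ?case using insert by simp
qed

lemma hp_anti: "\<delta> \<le> \<delta>' \<Longrightarrow> hausdorff_pre s \<delta>' A \<le> hausdorff_pre s \<delta> A"
  unfolding hausdorff_pre_def by (rule INF_superset_mono) (auto intro: order_trans)

lemma hp_sep:
  assumes "0 \<le> \<delta>" "\<delta> < \<eta>" and sep: "\<forall>x\<in>A. \<forall>y\<in>B. \<eta> \<le> dist x y"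
  shows "hausdorff_pre s \<delta> A + hausdorff_pre s \<delta> B \<le> hausdorff_pre s \<delta> (A \<union> B)"
  unfolding hausdorff_pre_def[of s \<delta> "A \<union> B"]
proof (rule INF_greatest)
  fix U assume U: "U \<in> {U :: nat \<Rightarrow> real set. A \<union> B \<subseteq> (\<Union>n. U n) \<and> (\<forall>n. bounded (U n) \<and> diameter (U n) \<le> \<delta>)}"
  define UA where "UA = (\<lambda>n. if U n \<inter> A \<noteq> {} then U n else {})"
  define UB where "UB = (\<lambda>n. if U n \<inter> B \<noteq> {} then U n else {})"
  have "hausdorff_pre s \<delta> A \<le> (\<Sum>n. ennreal (diameter (UA n) powr s))"
    unfolding hausdorff_pre_def
  proof (rule INF_lower)
    show "UA \<in> {U :: nat \<Rightarrow> real set. A \<subseteq> (\<Union>n. U n) \<and> (\<forall>n. bounded (U n) \<and> diameter (U n) \<le> \<delta>)}"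
      using U assms(1) unfolding UA_def by (auto split: if_splits) blast
  qed
  moreover have "hausdorff_pre s \<delta> B \<le> (\<Sum>n. ennreal (diameter (UB n) powr s))"
    unfolding hausdorff_pre_def
  proof (rule INF_lower)
    show "UB \<in> {U :: nat \<Rightarrow> real set. B \<subseteq> (\<Union>n. U n) \<and> (\<forall>n. bounded (U n) \<and> diameter (U n) \<le> \<delta>)}"
      using U assms(1) unfolding UB_def by (auto split: if_splits) blast
  qed
  moreover have "(\<Sum>n. ennreal (diameter (UA n) powr s)) + (\<Sum>n. ennreal (diameter (UB n) powr s))
      \<le> (\<Sum>n. ennreal (diameter (U n) powr s))"
  proof -
    have "(\<Sum>n. ennreal (diameter (UA n) powr s)) + (\<Sum>n. ennreal (diameter (UB n) powr s))
        = (\<Sum>n. ennreal (diameter (UA n) powr s) + ennreal (diameter (UB n) powr s))"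
      by (rule suminf_add) auto
    also have "\<dots> \<le> (\<Sum>n. ennreal (diameter (U n) powr s))"
    proof (rule suminf_le)
      fix n
      have "\<not> (U n \<inter> A \<noteq> {} \<and> U n \<inter> B \<noteq> {})"
      proof
        assume "U n \<inter> A \<noteq> {} \<and> U n \<inter> B \<noteq> {}"
        then obtain x y where "x \<in> U n" "x \<in> A" "y \<in> U n" "y \<in> B" by auto
        then have "dist x y \<le> diameter (U n)" using U by (intro diameter_bounded_bound) auto
        also have "\<dots> \<le> \<delta>" using U by auto
        finally show False using sep \<open>x \<in> A\<close> \<open>y \<in> B\<close> assms(2) by force
      qed
      then show "ennreal (diameter (UA n) powr s) + ennreal (diameter (UB n) powr s) \<le> ennreal (diameter (U n) powr s)"
        unfolding UA_def UB_def by auto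
    qed auto
    finally show ?thesis .
  qed
  ultimately show "hausdorff_pre s \<delta> A + hausdorff_pre s \<delta> B \<le> (\<Sum>n. ennreal (diameter (U n) powr s))"
    by (meson add_mono order_trans)
qed

lemma hm_sep:
  assumes "0 < \<eta>" and sep: "\<forall>x\<in>A. \<forall>y\<in>B. \<eta> \<le> dist x y"
  shows "hausdorff_measure s A + hausdorff_measure s B \<le> hausdorff_measure s (A \<union> B)"
proof -
  have key: "hausdorff_pre s d1 A + hausdorff_pre s d2 B \<le> hausdorff_measure s (A \<union> B)"
    if "d1 > 0" "d2 > 0" for d1 d2
  proof -
    define d where "d = min (min d1 d2) (\<eta>/2)"
    have d: "0 < d" "d \<le> d1" "d \<le> d2" "d < \<eta>" using that assms(1) by (auto simp: d_def)
    have "hausdorff_pre s d1 A + hausdorff_pre s d2 B \<le> hausdorff_pre s d A + hausdorff_pre s d B"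
      using d by (intro add_mono hp_anti)
    also have "\<dots> \<le> hausdorff_pre s d (A \<union> B)" using d sep by (intro hp_sep) auto
    also have "\<dots> \<le> hausdorff_measure s (A \<union> B)" unfolding hausdorff_measure_def
      using d by (intro SUP_upper) auto
    finally show ?thesis .
  qed
  have "hausdorff_measure s A + hausdorff_measure s B
     = (SUP d1\<in>{0<..}. hausdorff_pre s d1 A + hausdorff_measure s B)"
    unfolding hausdorff_measure_def[of s A] by (rule ennreal_SUP_add_left[symmetric]) auto
  also have "\<dots> \<le> hausdorff_measure s (A \<union> B)"
  proof (rule SUP_least)
    fix d1 :: real assume d1: "d1 \<in> {0<..}"
    have "hausdorff_pre s d1 A + hausdorff_measure s B = hausdorff_measure s B + hausdorff_pre s d1 A"
      by (simp add: add.commute)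
    also have "\<dots> = (SUP d2\<in>{0<..}. hausdorff_pre s d2 B + hausdorff_pre s d1 A)"
      unfolding hausdorff_measure_def[of s B] by (rule ennreal_SUP_add_left[symmetric]) auto
    also have "\<dots> \<le> hausdorff_measure s (A \<union> B)"
      using key d1 by (auto intro!: SUP_least simp: add.commute[of "hausdorff_pre s _ B"])
    finally show "hausdorff_pre s d1 A + hausdorff_measure s B \<le> hausdorff_measure s (A \<union> B)" .
  qed
  finally show ?thesis .
qed

lemma hm_UN_sep:
  assumes "finite S" "0 < \<eta>"
    and sep: "\<And>c c'. c \<in> S \<Longrightarrow> c' \<in> S \<Longrightarrow> c \<noteq> c' \<Longrightarrow> \<forall>x\<in>A c. \<forall>y\<in>A c'. \<eta> \<le> dist x y"
  shows "(\<Sum>c\<in>S. hausdorff_measure s (A c)) \<le> hausdorff_measure s (\<Union>c\<in>S. A c)"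
  using assms
proof (induction S rule: finite_induct)
  case empty then show ?case by simp
next
  case (insert x F)
  have "(\<Sum>c\<in>insert x F. hausdorff_measure s (A c)) = hausdorff_measure s (A x) + (\<Sum>c\<in>F. hausdorff_measure s (A c))"
    using insert by simp
  also have "\<dots> \<le> hausdorff_measure s (A x) + hausdorff_measure s (\<Union>c\<in>F. A c)"
    using insert by (intro add_left_mono) auto
  also have "\<dots> \<le> hausdorff_measure s (A x \<union> (\<Union>c\<in>F. A c))"
  proof (rule hm_sep[OF \<open>0 < \<eta>\<close>])
    show "\<forall>u\<in>A x. \<forall>v\<in>\<Union> (A ` F). \<eta> \<le> dist u v"
      using insert.prems(2) insert.hyps(2) by fastforce
  qed
  finally show ?case by simp
qed



lemma left_ends_alt:
  "left_ends b D n = {(\<Sum>i<n. real (x i) / real b ^ Suc i) | x. \<forall>i<n. x i \<in> D}"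
proof -
  have e: "(\<Sum>k=1..n. real (x k) / real b ^ k) = (\<Sum>i<n. real (x (Suc i)) / real b ^ Suc i)" for x
    by (simp add: sum.atLeast1_atMost_eq)
  show ?thesis
  proof (intro set_eqI iffI)
    fix y assume "y \<in> left_ends b D n"
    then obtain x where y: "y = (\<Sum>k=1..n. real (x k) / real b ^ k)" and xD: "\<forall>k\<in>{1..n}. x k \<in> D"
      unfolding left_ends_def by auto
    from y have "y = (\<Sum>i<n. real (x (Suc i)) / real b ^ Suc i)" by (simp only: e)
    with xD show "y \<in> {(\<Sum>i<n. real (x i) / real b ^ Suc i) | x. \<forall>i<n. x i \<in> D}"
      by (intro CollectI exI[of _ "\<lambda>i. x (Suc i)"]) auto
  next
    fix y assume "y \<in> {(\<Sum>i<n. real (x i) / real b ^ Suc i) | x. \<forall>i<n. x i \<in> D}"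
    then obtain x where "y = (\<Sum>i<n. real (x i) / real b ^ Suc i)" "\<forall>i<n. x i \<in> D" by auto
    then have "y = (\<Sum>k=1..n. real (x (k-1)) / real b ^ k)" using e[of "\<lambda>k. x (k-1)"] by simp
    then show "y \<in> left_ends b D n" unfolding left_ends_def using \<open>\<forall>i<n. x i \<in> D\<close>
      by (intro CollectI exI[of _ "\<lambda>k. x (k - 1)"]) auto
  qed
qed

lemma left_ends_finite:
  assumes "finite D" shows "finite (left_ends b D n)"
proof -
  have "left_ends b D n \<subseteq> (\<lambda>x. \<Sum>i<n. real (x i) / real b ^ Suc i) ` (\<Pi>\<^sub>E i\<in>{..<n}. D)"
  proof
    fix y assume "y \<in> left_ends b D n"
    then obtain x where x: "y = (\<Sum>i<n. real (x i) / real b ^ Suc i)" "\<forall>i<n. x i \<in> D"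
      unfolding left_ends_alt by auto
    have "y = (\<Sum>i<n. real (restrict x {..<n} i) / real b ^ Suc i)" using x by simp
    moreover have "restrict x {..<n} \<in> (\<Pi>\<^sub>E i\<in>{..<n}. D)" using x by auto
    ultimately show "y \<in> (\<lambda>x. \<Sum>i<n. real (x i) / real b ^ Suc i) ` (\<Pi>\<^sub>E i\<in>{..<n}. D)" by blast
  qed
  moreover have "finite (\<Pi>\<^sub>E i\<in>{..<n}. D)" using assms by (intro finite_PiE) auto
  ultimately show ?thesis by (meson finite_surj)
qed

lemma left_ends_int:
  assumes "b > 0" "y \<in> left_ends b D n"
  shows "\<exists>p::int. y = real_of_int p / real b ^ n"
proof -
  obtain x where x: "y = (\<Sum>i<n. real (x i) / real b ^ Suc i)"
    using assms unfolding left_ends_alt by auto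
  have "real (x i) / real b ^ Suc i = real (x i * b ^ (n - Suc i)) / real b ^ n" if "i < n" for i
  proof -
    have "Suc i + (n - Suc i) = n" using that by simp
    then have "real b ^ n = real b ^ Suc i * real b ^ (n - Suc i)"
      by (metis power_add)
    then show ?thesis using assms(1) by (simp add: field_simps)
  qed
  then have "y = (\<Sum>i<n. real (x i * b ^ (n - Suc i))) / real b ^ n"
    unfolding x sum_divide_distrib by (intro sum.cong) auto
  then show ?thesis by (intro exI[of _ "int (\<Sum>i<n. x i * b ^ (n - Suc i))"]) simp
qed

lemma left_ends_nonneg:
  assumes "y \<in> left_ends b D n" shows "0 \<le> y"
  using assms unfolding left_ends_def by (auto intro!: sum_nonneg)

lemma left_ends_Suc:
  assumes "y \<in> left_ends b D n" "d \<in> D"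
  shows "y + real d / real b ^ Suc n \<in> left_ends b D (Suc n)"
proof -
  obtain x where x: "y = (\<Sum>i<n. real (x i) / real b ^ Suc i)" "\<forall>i<n. x i \<in> D"
    using assms unfolding left_ends_alt by auto
  define x' where "x' = x(n := d)"
  have "(\<Sum>i<Suc n. real (x' i) / real b ^ Suc i) = y + real d / real b ^ Suc n"
    unfolding x x'_def by simp
  moreover have "\<forall>i<Suc n. x' i \<in> D" using x assms(2) by (auto simp: x'_def less_Suc_eq)
  ultimately show ?thesis unfolding left_ends_alt by (auto intro!: exI[of _ x'])
qed

lemma lt_real: "(n::nat) < b \<Longrightarrow> real n \<le> real b - 1"
proof -
  assume "n < b" then have "n + 1 \<le> b" by simp
  then have "real (n + 1) \<le> real b" by (simp only: of_nat_le_iff)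
  then show ?thesis by simp
qed

lemma dl_nonneg: "b \<ge> 1 \<Longrightarrow> 0 \<le> dl b D k"
  unfolding dl_def by (auto intro!: divide_nonneg_nonneg)

lemma dl_le:
  assumes "b \<ge> 2" "D \<subseteq> {0..<b}" "finite D" "D \<noteq> {}"
  shows "dl b D k \<le> 1 / real b ^ k"
proof -
  have "Min D \<in> D" using assms by auto
  then have "Min D < b" using assms(2) by (meson atLeastLessThan_iff subsetD)
  then have "real (Min D) \<le> real b - 1" by (rule lt_real)
  then show ?thesis unfolding dl_def using assms(1) mult_right_mono[OF \<open>real (Min D) \<le> real b - 1\<close>, of "real b ^ k"]
    by (auto simp: field_simps)
qed

lemma geo_tail:
  assumes "b \<ge> 2"
  shows "(\<lambda>i. c / real b ^ Suc (i + n)) sums (c / ((real b - 1) * real b ^ n))"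
proof -
  have "norm (1 / real b) < 1" using assms by auto
  from geometric_sums[OF this] have "(\<lambda>i. (1 / real b) ^ i) sums (1 / (1 - 1 / real b))" .
  from sums_mult[OF this, of "c / real b ^ Suc n"]
  have "(\<lambda>i. c / real b ^ Suc n * (1 / real b) ^ i) sums (c / real b ^ Suc n * (1 / (1 - 1 / real b)))" .
  moreover have "(\<lambda>i. c / real b ^ Suc n * (1 / real b) ^ i) = (\<lambda>i. c / real b ^ Suc (i + n))"
    by (rule ext) (simp add: power_add field_simps power_one_over)
  moreover have "c / real b ^ Suc n * (1 / (1 - 1 / real b)) = c / ((real b - 1) * real b ^ n)"
    using assms by (simp add: field_simps)
  ultimately show ?thesis by (simp only:)
qed

lemma center_in_C:
  assumes "b \<ge> 2" "finite D" "D \<noteq> {}" "y \<in> left_ends b D n"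
  shows "y + dl b D n \<in> cantor_set b D"
proof -
  obtain x where x: "y = (\<Sum>i<n. real (x i) / real b ^ Suc i)" "\<forall>i<n. x i \<in> D"
    using assms unfolding left_ends_alt by auto
  define x' where "x' = (\<lambda>i. if i < n then x i else Min D)"
  have "(\<lambda>i. real (x' (i + n)) / real b ^ Suc (i + n)) = (\<lambda>i. real (Min D) / real b ^ Suc (i + n))"
    by (auto simp: x'_def)
  then have "(\<lambda>i. real (x' (i + n)) / real b ^ Suc (i + n)) sums dl b D n"
    unfolding dl_def using geo_tail[OF assms(1), of "real (Min D)" n] by (simp only:)
  then have "(\<lambda>i. real (x' i) / real b ^ Suc i) sums (dl b D n + (\<Sum>i<n. real (x' i) / real b ^ Suc i))"
    by (rule sums_iff_shift[THEN iffD1])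
  moreover have "(\<Sum>i<n. real (x' i) / real b ^ Suc i) = y" unfolding x x'_def by simp
  ultimately have "(\<Sum>i. real (x' i) / real b ^ Suc i) = y + dl b D n"
    by (simp add: sums_unique[symmetric] add.commute)
  moreover have "\<forall>k. x' k \<in> D" using x assms by (auto simp: x'_def)
  ultimately show ?thesis unfolding cantor_set_def by (auto intro!: exI[of _ x'])
qed

lemma C_cover:
  assumes "b \<ge> 2" "D \<subseteq> {0..<b}" "x \<in> cantor_set b D"
  shows "\<exists>y\<in>left_ends b D n. y \<le> x \<and> x \<le> y + 1 / real b ^ n"
proof -
  obtain d where d: "x = (\<Sum>k. real (d k) / real b ^ Suc k)" "\<forall>k. d k \<in> D"
    using assms unfolding cantor_set_def by auto
  have db: "real (d k) \<le> real b - 1" for k using d assms(2) by (intro lt_real) auto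
  have gs: "(\<lambda>i. (real b - 1) / real b ^ Suc (i + n)) sums (1 / real b ^ n)"
    using geo_tail[OF assms(1), of "real b - 1" n] assms(1) by simp
  have nb: "norm (real (d (i + n)) / real b ^ Suc (i + n)) \<le> (real b - 1) / real b ^ Suc (i + n)" for i
  proof -
    have "norm (real (d (i + n)) / real b ^ Suc (i + n)) = real (d (i + n)) / real b ^ Suc (i + n)"
      by simp
    also have "\<dots> \<le> (real b - 1) / real b ^ Suc (i + n)"
      by (rule divide_right_mono[OF db]) simp
    finally show ?thesis .
  qed
  have sm: "summable (\<lambda>i. real (d (i + n)) / real b ^ Suc (i + n))"
    by (rule summable_comparison_test[OF _ sums_summable[OF gs]]) (use nb in blast)
  have sm': "summable (\<lambda>i. real (d i) / real b ^ Suc i)"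
    using sm summable_iff_shift[of "\<lambda>i. real (d i) / real b ^ Suc i" n] by (simp only:)
  define y where "y = (\<Sum>i<n. real (d i) / real b ^ Suc i)"
  define t where "t = (\<Sum>i. real (d (i + n)) / real b ^ Suc (i + n))"
  have "x = t + y" unfolding d t_def y_def
    by (rule suminf_split_initial_segment[OF sm'])
  moreover have "0 \<le> t" unfolding t_def by (intro suminf_nonneg sm) auto
  moreover have "t \<le> 1 / real b ^ n"
  proof -
    have "t \<le> (\<Sum>i. (real b - 1) / real b ^ Suc (i + n))" unfolding t_def
      by (rule suminf_le[OF _ sm sums_summable[OF gs]]) (rule divide_right_mono[OF db], simp)
    then show ?thesis using sums_unique[OF gs] by simp
  qed
  moreover have "y \<in> left_ends b D n" unfolding left_ends_alt y_def using d by auto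
  ultimately show ?thesis by (intro bexI[of _ y]) auto
qed



lemma int_sep:
  fixes B :: real assumes "B > 0" "u = of_int p / B" "v = of_int q / B" "u \<noteq> v"
  shows "1 / B \<le> \<bar>u - v\<bar>"
proof -
  have "p \<noteq> q" using assms by auto
  then have "1 \<le> \<bar>real_of_int (p - q)\<bar>" by linarith
  moreover have "\<bar>u - v\<bar> = \<bar>real_of_int (p - q)\<bar> / B" using assms(1-3) by (simp add: diff_divide_distrib[symmetric] abs_divide)
  ultimately show ?thesis using assms(1) by (simp add: divide_right_mono)
qed

lemma dl_diff:
  assumes "b \<ge> 2" "j \<le> i"
  shows "dl b D j - dl b D i = real (Min D * (\<Sum>t<i-j. b^t)) / real b ^ i"
proof -
  define e where "e = i - j"
  have i: "i = j + e" using assms e_def by simp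
  have B: "real b > 1" using assms by simp
  have S: "(\<Sum>t<e. real b ^ t) = (1 - real b ^ e) / (1 - real b)"
    using sum_gp_strict[of "real b" e] B by simp
  define X where "X = real b ^ j"
  define Y where "Y = real b ^ e"
  define c where "c = real (Min D)"
  have nz: "X \<noteq> 0" "Y \<noteq> 0" "real b - 1 \<noteq> 0" using B by (auto simp: X_def Y_def)
  have bi: "real b ^ i = X * Y" unfolding i X_def Y_def by (simp add: power_add)
  have "dl b D j - dl b D i = c / ((real b - 1) * X) - c / ((real b - 1) * (X * Y))"
    unfolding dl_def bi c_def X_def by simp
  also have "c / ((real b - 1) * X) = c * Y / ((real b - 1) * (X * Y))" using nz by simp
  also have "c * Y / ((real b - 1) * (X * Y)) - c / ((real b - 1) * (X * Y)) = c * ((Y - 1) / (real b - 1)) / (X * Y)"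
    by (simp add: diff_divide_distrib[symmetric] algebra_simps)
  also have "(Y - 1) / (real b - 1) = (\<Sum>t<e. real b ^ t)" unfolding S Y_def
    by (metis minus_diff_eq minus_divide_divide)
  finally have "dl b D j - dl b D i = real (Min D) * (\<Sum>t<e. real b ^ t) / real b ^ i"
    unfolding bi c_def by simp
  then show ?thesis by (simp add: e_def)
qed

lemma star_eq_aux:
  fixes B P Q d m :: real
  assumes "B > 1" "Suc k = j + e"
    and "P / B^k + d / B^(Suc k) + m / ((B - 1) * B^(Suc k)) = Q / B^j + m / ((B - 1) * B^j)"
  shows "P * (B - 1) * B + d * (B - 1) + m = Q * (B - 1) * B^e + m * B^e"
proof -
  have p1: "B^(Suc k) = B^j * B^e" using assms(2) by (metis power_add)
  have p2: "B^(Suc k) = B * B^k" by simp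
  have nz: "B \<noteq> 0" "B - 1 \<noteq> 0" "B^k \<noteq> 0" "B^j \<noteq> 0" "B^e \<noteq> 0" using assms(1) by auto
  have t1: "P / B^k * ((B - 1) * B^(Suc k)) = P * (B - 1) * B" using nz by (simp add: p2)
  have t2: "d / B^(Suc k) * ((B - 1) * B^(Suc k)) = d * (B - 1)" using nz by simp
  have t3: "m / ((B - 1) * B^(Suc k)) * ((B - 1) * B^(Suc k)) = m" using nz by simp
  have L: "(P / B^k + d / B^(Suc k) + m / ((B - 1) * B^(Suc k))) * ((B - 1) * B^(Suc k))
        = P * (B - 1) * B + d * (B - 1) + m"
    unfolding distrib_right t1 t2 t3 ..
  have t4: "Q / B^j * ((B - 1) * B^(Suc k)) = Q * (B - 1) * B^e" unfolding p1 using nz by simp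
  have t5: "m / ((B - 1) * B^j) * ((B - 1) * B^(Suc k)) = m * B^e" unfolding p1 using nz by simp
  have R: "(Q / B^j + m / ((B - 1) * B^j)) * ((B - 1) * B^(Suc k)) = Q * (B - 1) * B^e + m * B^e"
    unfolding distrib_right t4 t5 ..
  show ?thesis using L R assms(3) by metis
qed

lemma star_child:
  assumes b: "b \<ge> 2" and D: "D \<subseteq> {0..<b}" "finite D" and y: "y \<in> left_ends b D k"
    and d: "d \<in> D" "d \<noteq> Min D"
  shows "y + real d / real b ^ Suc k \<in> left_ends_star b D (Suc k)"
  unfolding left_ends_star_def
proof (intro CollectI conjI allI impI)
  show "y + real d / real b ^ Suc k \<in> left_ends b D (Suc k)" using left_ends_Suc[OF y d(1)] .
  fix q :: int and j assume j: "1 \<le> j \<and> j < Suc k"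
  show "y + real d / real b ^ Suc k + dl b D (Suc k) \<noteq> real_of_int q / real b ^ j + dl b D j"
  proof
    assume eq: "y + real d / real b ^ Suc k + dl b D (Suc k) = real_of_int q / real b ^ j + dl b D j"
    obtain p where p: "y = real_of_int p / real b ^ k" using left_ends_int[OF _ y] b by auto
    define e where "e = Suc k - j"
    have ke: "Suc k = j + e" "e \<ge> 1" using j by (auto simp: e_def)
    define E where "E = e - 1"
    have eE: "e = Suc E" using ke by (simp add: E_def)
    have "real_of_int p * (real b - 1) * real b + real d * (real b - 1) + real (Min D)
        = real_of_int q * (real b - 1) * real b ^ e + real (Min D) * real b ^ e"
      using star_eq_aux[of "real b" k j e "real_of_int p" "real d" "real (Min D)" "real_of_int q"] b ke eq p
      unfolding dl_def by simp
    then have "real_of_int (p * (int b - 1) * int b + int d * (int b - 1) + int (Min D))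
        = real_of_int (q * (int b - 1) * int b * int b ^ E + int (Min D) * int b * int b ^ E)"
      by (simp add: eE)
    then have ieq: "p * (int b - 1) * int b + int d * (int b - 1) + int (Min D)
        = q * (int b - 1) * int b * int b ^ E + int (Min D) * int b * int b ^ E"
      by (simp only: of_int_eq_iff)
    have "int (Min D) - int d = int b * (q * (int b - 1) * int b ^ E + int (Min D) * int b ^ E - p * (int b - 1) - int d)"
      using ieq by (simp add: algebra_simps)
    then have dv: "int b dvd (int (Min D) - int d)" by simp
    have "Min D \<in> D" using Min_in[OF D(2)] d by auto
    then have "Min D < b" "d < b" using D d by auto
    moreover have "int (Min D) - int d \<noteq> 0" using d by simp
    ultimately have "\<bar>int b\<bar> \<le> \<bar>int (Min D) - int d\<bar>" using dvd_imp_le_int dv by blast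
    then show False using \<open>Min D < b\<close> \<open>d < b\<close> by linarith
  qed
qed



locale ahl =
  fixes b :: nat and D :: "nat set" and \<gamma> r0 c1 c2 :: real
  assumes b2: "b \<ge> 2" and Dcard: "2 \<le> card D" and Dsub: "D \<subseteq> {0..<b}" and Dfin: "finite D" and Dne: "D \<noteq> {}"
    and g0: "\<gamma> \<ge> 0" and c1: "c1 > 0" and c2: "c2 > 0"
    and ahl: "\<forall>x \<in> cantor_set b D. \<forall>\<rho>. 0 < \<rho> \<and> \<rho> < r0 \<longrightarrow>
                   ennreal (c1 * \<rho> powr \<gamma>) \<le> hausdorff_measure \<gamma> (ball x \<rho> \<inter> cantor_set b D) \<and>
                   hausdorff_measure \<gamma> (ball x \<rho> \<inter> cantor_set b D) \<le> ennreal (c2 * \<rho> powr \<gamma>)"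
begin

abbreviation "CC \<equiv> cantor_set b D"
abbreviation "hm X \<equiv> hausdorff_measure \<gamma> (X \<inter> CC)"

lemma ennreal_card: "0 \<le> a \<Longrightarrow> (\<Sum>c\<in>S. ennreal a) = ennreal (real (card S) * a)"
  by (simp add: ennreal_mult ennreal_of_nat_eq_real_of_nat)

lemma sep_count:
  assumes S: "finite S" "S \<subseteq> CC" and sep: "\<And>c c'. c \<in> S \<Longrightarrow> c' \<in> S \<Longrightarrow> c \<noteq> c' \<Longrightarrow> \<sigma> \<le> \<bar>c - c'\<bar>"
    and r: "0 < \<rho>" "2 * \<rho> < \<sigma>" "\<rho> < r0"
  shows "ennreal (real (card S) * (c1 * \<rho> powr \<gamma>)) \<le> hm (\<Union>c\<in>S. ball c \<rho>)"
proof -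
  have "ennreal (real (card S) * (c1 * \<rho> powr \<gamma>)) = (\<Sum>c\<in>S. ennreal (c1 * \<rho> powr \<gamma>))"
    by (rule ennreal_card[symmetric]) (use c1 in auto)
  also have "\<dots> \<le> (\<Sum>c\<in>S. hm (ball c \<rho>))"
    using ahl S r by (intro sum_mono) auto
  also have "\<dots> \<le> hausdorff_measure \<gamma> (\<Union>c\<in>S. ball c \<rho> \<inter> CC)"
  proof (rule hm_UN_sep[OF S(1), of "\<sigma> - 2 * \<rho>"])
    show "0 < \<sigma> - 2 * \<rho>" using r by simp
    fix c c' assume cc: "c \<in> S" "c' \<in> S" "c \<noteq> c'"
    show "\<forall>x\<in>ball c \<rho> \<inter> CC. \<forall>y\<in>ball c' \<rho> \<inter> CC. \<sigma> - 2 * \<rho> \<le> dist x y"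
    proof (intro ballI)
      fix x y assume "x \<in> ball c \<rho> \<inter> CC" "y \<in> ball c' \<rho> \<inter> CC"
      then have "dist c x < \<rho>" "dist c' y < \<rho>" by auto
      moreover have "\<sigma> \<le> \<bar>c - c'\<bar>" using sep cc by auto
      ultimately show "\<sigma> - 2 * \<rho> \<le> dist x y" unfolding dist_real_def by linarith
    qed
  qed
  also have "(\<Union>c\<in>S. ball c \<rho> \<inter> CC) = (\<Union>c\<in>S. ball c \<rho>) \<inter> CC" by auto
  finally show ?thesis .
qed

lemma cov:
  assumes Y: "finite Y" "Y \<subseteq> CC" and X: "X \<inter> CC \<subseteq> (\<Union>c\<in>Y. ball c R)" and R: "0 < R" "R < r0"
  shows "hm X \<le> ennreal (real (card Y) * (c2 * R powr \<gamma>))"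
proof -
  have "hm X \<le> hausdorff_measure \<gamma> (\<Union>c\<in>Y. ball c R \<inter> CC)"
    using X by (intro hm_mono) auto
  also have "\<dots> \<le> (\<Sum>c\<in>Y. hm (ball c R))" by (rule hm_UN_le[OF Y(1)])
  also have "\<dots> \<le> (\<Sum>c\<in>Y. ennreal (c2 * R powr \<gamma>))"
    using ahl Y R by (intro sum_mono) auto
  also have "\<dots> = ennreal (real (card Y) * (c2 * R powr \<gamma>))"
    by (rule ennreal_card) (use c2 in auto)
  finally show ?thesis .
qed

lemma pack:
  assumes S: "finite S" "S \<subseteq> CC" and sep: "\<And>c c'. c \<in> S \<Longrightarrow> c' \<in> S \<Longrightarrow> c \<noteq> c' \<Longrightarrow> \<sigma> \<le> \<bar>c - c'\<bar>"
    and s: "0 < \<sigma>" "\<sigma> / 4 < r0" and z: "z \<in> CC" and R: "0 < R" "R < r0"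
    and inR: "\<And>c. c \<in> S \<Longrightarrow> \<bar>c - z\<bar> + \<sigma> / 4 \<le> R"
  shows "real (card S) * (c1 * (\<sigma> / 4) powr \<gamma>) \<le> c2 * R powr \<gamma>"
proof -
  have "ennreal (real (card S) * (c1 * (\<sigma> / 4) powr \<gamma>)) \<le> hm (\<Union>c\<in>S. ball c (\<sigma> / 4))"
    using s by (intro sep_count[OF S sep]) auto
  also have "\<dots> \<le> hm (ball z R)"
  proof (intro hm_mono)
    have "(\<Union>c\<in>S. ball c (\<sigma> / 4)) \<subseteq> ball z R"
    proof
      fix x assume "x \<in> (\<Union>c\<in>S. ball c (\<sigma> / 4))"
      then obtain c where "c \<in> S" "dist c x < \<sigma> / 4" by auto
      then show "x \<in> ball z R" using inR[of c] unfolding dist_real_def mem_ball by linarith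
    qed
    then show "(\<Union>c\<in>S. ball c (\<sigma> / 4)) \<inter> CC \<subseteq> ball z R \<inter> CC" by auto
  qed
  also have "\<dots> \<le> ennreal (c2 * R powr \<gamma>)" using ahl z R by auto
  finally show ?thesis using c2 by (subst (asm) ennreal_le_iff) auto
qed

definition P :: "nat \<Rightarrow> real set" where
  "P k = (\<lambda>y. y + dl b D k) ` left_ends_star b D k"

lemma P_finite: "finite (P k)"
  unfolding P_def left_ends_star_def using left_ends_finite[OF Dfin] by auto

lemma P_C: "P k \<subseteq> CC"
  unfolding P_def left_ends_star_def using center_in_C[OF b2 Dfin Dne] by auto

lemma P_sep:
  assumes "c \<in> P k" "c' \<in> P k" "c \<noteq> c'"
  shows "1 / real b ^ k \<le> \<bar>c - c'\<bar>"
proof -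
  obtain y y' where y: "y \<in> left_ends b D k" "y' \<in> left_ends b D k" "c = y + dl b D k" "c' = y' + dl b D k"
    using assms unfolding P_def left_ends_star_def by auto
  obtain p q where "y = real_of_int p / real b ^ k" "y' = real_of_int q / real b ^ k"
    using left_ends_int y b2 by (metis le0 not_numeral_le_zero not_gr_zero)
  moreover have "y \<noteq> y'" using y assms by auto
  ultimately have "1 / real b ^ k \<le> \<bar>y - y'\<bar>" using b2 by (intro int_sep) auto
  then show ?thesis using y by simp
qed

lemma P_sep2:
  assumes "1 \<le> j" "j < i" "c \<in> P i" "c' \<in> P j"
  shows "1 / real b ^ i \<le> \<bar>c - c'\<bar>"
proof -
  obtain y where y: "y \<in> left_ends_star b D i" "c = y + dl b D i"
    using assms unfolding P_def by auto
  obtain y' where y': "y' \<in> left_ends b D j" "c' = y' + dl b D j"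
    using assms unfolding P_def left_ends_star_def by auto
  have bpos: "b > 0" using b2 by simp
  have yl: "y \<in> left_ends b D i" using y(1) unfolding left_ends_star_def by auto
  obtain p where p: "y = real_of_int p / real b ^ i"
    using left_ends_int[OF bpos yl] by auto
  obtain q where q: "y' = real_of_int q / real b ^ j"
    using left_ends_int[OF bpos y'(1)] by auto
  have neq: "c \<noteq> c'" using y(1) assms(1,2) unfolding left_ends_star_def y(2) y'(2) q by auto
  define v where "v = c' - dl b D i"
  have bj: "real b ^ i = real b ^ j * real b ^ (i - j)" using assms(2)
    by (metis le_add_diff_inverse less_imp_le power_add)
  have "v = (real_of_int q * real b ^ (i - j) + real (Min D * (\<Sum>t<i-j. b^t))) / real b ^ i"
    unfolding v_def y'(2) q using dl_diff[OF b2, of j i D] assms(2) bpos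
    by (simp add: bj add_divide_distrib)
  then have v: "v = real_of_int (q * int b ^ (i - j) + int (Min D * (\<Sum>t<i-j. b^t))) / real b ^ i" by simp
  have "1 / real b ^ i \<le> \<bar>y - v\<bar>"
    by (rule int_sep[OF _ p v]) (use bpos neq y(2) v_def in auto)
  then show ?thesis using y(2) v_def by simp
qed

end


lemma hm_empty: "hausdorff_measure s {} = 0"
  using hm_UN_le[of "{}" s "\<lambda>_. {}"] by simp

lemma inv_pow_anti: "(b::nat) \<ge> 1 \<Longrightarrow> m \<le> n \<Longrightarrow> 1 / real b ^ n \<le> 1 / real b ^ m"
  by (rule divide_left_mono) (auto intro: power_increasing)

context ahl begin

lemma lower:
  assumes x0: "x0 \<in> CC" and r: "0 < r" "2 * r < r0" and k: "1 \<le> k" and small: "1 / real b ^ (k - 1) < r / 4"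
    and rho: "0 < \<rho>" "\<rho> \<le> 1 / real b ^ k / 2"
  shows "ennreal ((c1 * (r / 2) powr \<gamma> / (c2 * (2 / real b ^ (k - 1)) powr \<gamma>)) * (c1 * (\<rho> / 2) powr \<gamma>))
          \<le> hm (ball x0 r \<inter> (\<Union>c\<in>P k. ball c \<rho>))"
proof -
  define h where "h = 1 / real b ^ (k - 1)"
  define hk where "hk = 1 / real b ^ k"
  have hpos: "0 < h" "0 < hk" using b2 by (auto simp: h_def hk_def)
  obtain k' where k': "k = Suc k'" using k by (cases k) auto
  have hkh: "h = real b * hk" using b2 unfolding h_def hk_def k' by simp
  have hk_le: "hk \<le> h" using hkh b2 hpos by (simp add: mult_le_cancel_right1)
  define Y where "Y = {y \<in> left_ends b D (k - 1). \<exists>x\<in>CC. y \<le> x \<and> x \<le> y + h \<and> dist x x0 < r / 2}"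
  have Yfin: "finite Y" unfolding Y_def using left_ends_finite[OF Dfin] by auto
  define Yc where "Yc = (\<lambda>y. y + dl b D (k - 1)) ` Y"
  have Ycfin: "finite Yc" "card Yc \<le> card Y" using Yfin unfolding Yc_def by (auto intro: card_image_le)
  have YcC: "Yc \<subseteq> CC" unfolding Yc_def Y_def using center_in_C[OF b2 Dfin Dne] by auto
  have cover: "ball x0 (r / 2) \<inter> CC \<subseteq> (\<Union>c\<in>Yc. ball c (2 * h))"
  proof
    fix x assume x: "x \<in> ball x0 (r / 2) \<inter> CC"
    then obtain y where y: "y \<in> left_ends b D (k - 1)" "y \<le> x" "x \<le> y + h"
      using C_cover[OF b2 Dsub, of x "k - 1"] unfolding h_def by auto
    then have "y \<in> Y" unfolding Y_def using x by (auto simp: dist_commute)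
    moreover have "0 \<le> dl b D (k - 1)" "dl b D (k - 1) \<le> h"
      using dl_nonneg dl_le[OF b2 Dsub Dfin Dne] b2 unfolding h_def by auto
    ultimately have "dist (y + dl b D (k - 1)) x < 2 * h" using y hpos unfolding dist_real_def by auto
    then show "x \<in> (\<Union>c\<in>Yc. ball c (2 * h))" unfolding Yc_def using \<open>y \<in> Y\<close> by auto
  qed
  have "ennreal (c1 * (r / 2) powr \<gamma>) \<le> hm (ball x0 (r / 2))" using ahl x0 r by auto
  also have "\<dots> \<le> ennreal (real (card Yc) * (c2 * (2 * h) powr \<gamma>))"
    by (rule cov[OF Ycfin(1) YcC cover]) (use hpos small r in \<open>auto simp: h_def\<close>)
  also have "\<dots> \<le> ennreal (real (card Y) * (c2 * (2 * h) powr \<gamma>))"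
    using Ycfin c2 by (intro ennreal_leI mult_right_mono) auto
  finally have cY: "c1 * (r / 2) powr \<gamma> \<le> real (card Y) * (c2 * (2 * h) powr \<gamma>)"
    using c2 by (subst (asm) ennreal_le_iff) auto
  have "D - {Min D} \<noteq> {}"
  proof
    assume "D - {Min D} = {}"
    then have "D \<subseteq> {Min D}" by auto
    then have "card D \<le> 1" using card_mono[of "{Min D}" D] by auto
    then show False using Dcard by simp
  qed
  then obtain d0 where d0: "d0 \<in> D" "d0 \<noteq> Min D" by auto
  define Q where "Q = (\<lambda>y. y + real d0 / real b ^ k + dl b D k) ` Y"
  have cardQ: "card Q = card Y" unfolding Q_def by (rule card_image) (auto simp: inj_on_def)
  have QP: "Q \<subseteq> P k"
  proof
    fix c assume "c \<in> Q"
    then obtain y where y: "y \<in> Y" "c = y + real d0 / real b ^ k + dl b D k" unfolding Q_def by auto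
    have "y + real d0 / real b ^ Suc (k - 1) \<in> left_ends_star b D (Suc (k - 1))"
      using star_child[OF b2 Dsub Dfin _ d0] y unfolding Y_def by auto
    then show "c \<in> P k" unfolding P_def y(2) using k by (auto simp: image_iff)
  qed
  have Qfin: "finite Q" using QP P_finite finite_subset by blast
  have QC: "Q \<subseteq> CC" using QP P_C by auto
  have "ennreal (real (card Q) * (c1 * (\<rho> / 2) powr \<gamma>)) \<le> hm (\<Union>c\<in>Q. ball c (\<rho> / 2))"
  proof (rule sep_count[OF Qfin QC, of hk])
    show "\<And>c c'. c \<in> Q \<Longrightarrow> c' \<in> Q \<Longrightarrow> c \<noteq> c' \<Longrightarrow> hk \<le> \<bar>c - c'\<bar>"
      using P_sep QP unfolding hk_def by blast
  qed (use rho hpos hk_le small r in \<open>auto simp: hk_def h_def\<close>)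
  also have "\<dots> \<le> hm (ball x0 r \<inter> (\<Union>c\<in>P k. ball c \<rho>))"
  proof (rule hm_mono, rule Int_mono[OF _ order_refl], rule UN_least)
    fix c assume "c \<in> Q"
    then obtain y where y: "y \<in> Y" "c = y + real d0 / real b ^ k + dl b D k" unfolding Q_def by auto
    obtain x where x: "x \<in> CC" "y \<le> x" "x \<le> y + h" "dist x x0 < r / 2" using y unfolding Y_def by auto
    have "d0 < b" using d0 Dsub by auto
    then have "real d0 \<le> real b - 1" by (rule lt_real)
    then have "real d0 / real b ^ k \<le> (real b - 1) * hk" unfolding hk_def by (simp add: divide_right_mono)
    moreover have "dl b D k \<le> hk" "0 \<le> dl b D k" using dl_le[OF b2 Dsub Dfin Dne] dl_nonneg b2 unfolding hk_def by auto
    moreover have "0 \<le> real d0 / real b ^ k" by simp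
    ultimately have cy: "y \<le> c" "c \<le> y + h" using y(2) hkh by (auto simp: algebra_simps)
    have "\<bar>c - x0\<bar> < r / 2 + h" using x cy unfolding dist_real_def by linarith
    moreover have "\<rho> \<le> hk / 2" using rho hpos unfolding hk_def by simp
    moreover have "h < r / 4" using small unfolding h_def .
    ultimately have "ball c (\<rho> / 2) \<subseteq> ball x0 r" using hk_le
      unfolding subset_iff mem_ball dist_real_def by (intro allI impI) arith
    moreover have "c \<in> P k" using QP \<open>c \<in> Q\<close> by auto
    moreover have "ball c (\<rho> / 2) \<subseteq> ball c \<rho>" using rho by auto
    ultimately show "ball c (\<rho> / 2) \<subseteq> ball x0 r \<inter> (\<Union>c\<in>P k. ball c \<rho>)" by blast
  qed
  finally have up: "ennreal (real (card Y) * (c1 * (\<rho> / 2) powr \<gamma>)) \<le> hm (ball x0 r \<inter> (\<Union>c\<in>P k. ball c \<rho>))"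
    by (simp add: cardQ)
  have "c1 * (r / 2) powr \<gamma> / (c2 * (2 * h) powr \<gamma>) \<le> real (card Y)"
    using cY c2 hpos by (simp add: divide_le_eq)
  then have "(c1 * (r / 2) powr \<gamma> / (c2 * (2 * h) powr \<gamma>)) * (c1 * (\<rho> / 2) powr \<gamma>)
      \<le> real (card Y) * (c1 * (\<rho> / 2) powr \<gamma>)"
    using c1 by (intro mult_right_mono) auto
  then have "ennreal ((c1 * (r / 2) powr \<gamma> / (c2 * (2 * h) powr \<gamma>)) * (c1 * (\<rho> / 2) powr \<gamma>))
      \<le> ennreal (real (card Y) * (c1 * (\<rho> / 2) powr \<gamma>))" by (rule ennreal_leI)
  also note up
  finally show ?thesis unfolding h_def by simp
qed

end


context ahl begin

definition Kc :: real where
  "Kc = (c2 / c1) ^ 6 * (2 powr \<gamma>) ^ 7 * 3 powr \<gamma> * (4 powr \<gamma>) ^ 2 * (real b powr \<gamma>) ^ 2"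

lemma Kc_pos: "Kc > 0" unfolding Kc_def using c1 c2 b2 by simp

lemma upper:
  assumes x0: "x0 \<in> CC" and r: "0 < r" "2 * r < r0"
    and ij: "1 \<le> j" "j < i" and small: "1 / real b ^ (j - 1) < r / 4"
    and rhoi: "0 < \<rho>i" "\<rho>i \<le> 1 / real b ^ i / 2" and rhoj: "0 < \<rho>j" "\<rho>j \<le> 1 / real b ^ j / 2"
  shows "hm ((ball x0 r \<inter> (\<Union>c\<in>P i. ball c \<rho>i)) \<inter> (ball x0 r \<inter> (\<Union>c\<in>P j. ball c \<rho>j)))
     \<le> ennreal ((c2 * (2 * r) powr \<gamma> / (c1 * (1 / real b ^ j / 4) powr \<gamma>))
             * (c2 * (3 * \<rho>j) powr \<gamma> / (c1 * (1 / real b ^ i / 4) powr \<gamma>)) * (c2 * \<rho>i powr \<gamma>))"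
proof -
  define hi where "hi = 1 / real b ^ i"
  define hj where "hj = 1 / real b ^ j"
  have hpos: "0 < hi" "0 < hj" using b2 by (auto simp: hi_def hj_def)
  have hij: "hi \<le> hj" "hj \<le> 1 / real b ^ (j - 1)" unfolding hi_def hj_def using b2 ij
    by (auto intro!: inv_pow_anti)
  have hjr: "hj < r / 4" using hij small by linarith
  define N where "N = {c' \<in> P j. \<bar>c' - x0\<bar> < r + \<rho>j}"
  have Nfin: "finite N" and NC: "N \<subseteq> CC" using P_finite P_C unfolding N_def by auto
  have cN: "real (card N) * (c1 * (hj / 4) powr \<gamma>) \<le> c2 * (2 * r) powr \<gamma>"
  proof (rule pack[OF Nfin NC _ _ _ x0])
    show "\<And>c c'. c \<in> N \<Longrightarrow> c' \<in> N \<Longrightarrow> c \<noteq> c' \<Longrightarrow> hj \<le> \<bar>c - c'\<bar>"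
      using P_sep unfolding N_def hj_def by blast
    fix c assume "c \<in> N"
    then show "\<bar>c - x0\<bar> + hj / 4 \<le> 2 * r" using rhoj hjr unfolding N_def hj_def by auto
  qed (use hpos r hjr in auto)
  define Sc where "Sc c' = {c \<in> P i. \<bar>c - c'\<bar> < \<rho>i + \<rho>j}" for c'
  have Scfin: "finite (Sc c')" "Sc c' \<subseteq> CC" for c' using P_finite P_C unfolding Sc_def by auto
  have cS: "real (card (Sc c')) * (c1 * (hi / 4) powr \<gamma>) \<le> c2 * (3 * \<rho>j) powr \<gamma>" if c': "c' \<in> N" for c'
  proof (cases "Sc c' = {}")
    case True then show ?thesis using c2 by simp
  next
    case False
    then obtain c0 where c0: "c0 \<in> P i" "\<bar>c0 - c'\<bar> < \<rho>i + \<rho>j" unfolding Sc_def by auto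
    have "c' \<in> P j" using c' unfolding N_def by auto
    then have "hi \<le> \<bar>c0 - c'\<bar>" using P_sep2[OF ij c0(1)] unfolding hi_def by blast
    then have rj: "hi / 2 < \<rho>j" using c0 rhoi unfolding hi_def by linarith
    show ?thesis
    proof (rule pack[OF Scfin])
      show "\<And>c c''. c \<in> Sc c' \<Longrightarrow> c'' \<in> Sc c' \<Longrightarrow> c \<noteq> c'' \<Longrightarrow> hi \<le> \<bar>c - c''\<bar>"
        using P_sep unfolding Sc_def hi_def by blast
      show "c' \<in> CC" using \<open>c' \<in> P j\<close> P_C by auto
      fix c assume "c \<in> Sc c'"
      then show "\<bar>c - c'\<bar> + hi / 4 \<le> 3 * \<rho>j" using rhoi rj unfolding Sc_def hi_def by auto
    qed (use hpos r hjr rhoj hij in \<open>auto simp: hj_def\<close>)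
  qed
  define Mv where "Mv = c2 * (3 * \<rho>j) powr \<gamma> / (c1 * (hi / 4) powr \<gamma>)"
  define Nv where "Nv = c2 * (2 * r) powr \<gamma> / (c1 * (hj / 4) powr \<gamma>)"
  have pos: "0 < c1 * (hi / 4) powr \<gamma>" "0 < c1 * (hj / 4) powr \<gamma>" using c1 hpos by auto
  have cS': "real (card (Sc c')) \<le> Mv" if "c' \<in> N" for c'
    using cS[OF that] pos unfolding Mv_def by (simp add: le_divide_eq)
  have cN': "real (card N) \<le> Nv" using cN pos unfolding Nv_def by (simp add: le_divide_eq)
  have Mv0: "0 \<le> Mv" unfolding Mv_def using c1 c2 by auto
  define U where "U = (\<Union>c'\<in>N. Sc c')"
  have Ufin: "finite U" "U \<subseteq> CC" using Nfin Scfin unfolding U_def by auto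
  have "card U \<le> (\<Sum>c'\<in>N. card (Sc c'))" unfolding U_def by (rule card_UN_le[OF Nfin])
  then have "real (card U) \<le> real (\<Sum>c'\<in>N. card (Sc c'))" by (simp only: of_nat_le_iff)
  then have "real (card U) \<le> (\<Sum>c'\<in>N. real (card (Sc c')))" by simp
  also have "\<dots> \<le> (\<Sum>c'\<in>N. Mv)" by (intro sum_mono cS')
  also have "\<dots> = real (card N) * Mv" by simp
  also have "\<dots> \<le> Nv * Mv" using cN' Mv0 by (intro mult_right_mono)
  finally have cU: "real (card U) \<le> Nv * Mv" .
  have incl: "((ball x0 r \<inter> (\<Union>c\<in>P i. ball c \<rho>i)) \<inter> (ball x0 r \<inter> (\<Union>c\<in>P j. ball c \<rho>j))) \<inter> CC
      \<subseteq> (\<Union>c\<in>U. ball c \<rho>i)"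
  proof
    fix x assume "x \<in> ((ball x0 r \<inter> (\<Union>c\<in>P i. ball c \<rho>i)) \<inter> (ball x0 r \<inter> (\<Union>c\<in>P j. ball c \<rho>j))) \<inter> CC"
    then obtain c c' where x: "dist x0 x < r" "c \<in> P i" "dist c x < \<rho>i" "c' \<in> P j" "dist c' x < \<rho>j" by auto
    then have "c' \<in> N" unfolding N_def dist_real_def by auto
    moreover have "c \<in> Sc c'" using x unfolding Sc_def dist_real_def by auto
    ultimately show "x \<in> (\<Union>c\<in>U. ball c \<rho>i)" using x unfolding U_def by auto
  qed
  have "hm ((ball x0 r \<inter> (\<Union>c\<in>P i. ball c \<rho>i)) \<inter> (ball x0 r \<inter> (\<Union>c\<in>P j. ball c \<rho>j)))
      \<le> ennreal (real (card U) * (c2 * \<rho>i powr \<gamma>))"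
    by (rule cov[OF Ufin incl]) (use rhoi hpos hij hjr r in \<open>auto simp: hi_def\<close>)
  also have "\<dots> \<le> ennreal (Nv * Mv * (c2 * \<rho>i powr \<gamma>))"
    using cU c2 by (intro ennreal_leI mult_right_mono) auto
  finally show ?thesis unfolding Nv_def Mv_def hi_def hj_def .
qed

end


lemma alg_id:
  fixes c1 c2 A G2 G3 G4 Gb Hi Hj Pi Pj :: real
  assumes "c1 > 0" "c2 > 0" "A > 0" "G2 > 0" "G3 > 0" "G4 > 0" "Gb > 0" "Hi > 0" "Hj > 0" "Pi > 0" "Pj > 0"
  shows "(c2 * (G2 * A) / (c1 * (Hj / G4))) * (c2 * (G3 * Pj) / (c1 * (Hi / G4))) * (c2 * Pi)
    = (c2 / c1) ^ 6 * G2 ^ 7 * G3 * G4 ^ 2 * Gb ^ 2 / (c2 * A)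
       * ((c1 * (A / G2) / (c2 * (G2 * Gb * Hi))) * (c1 * (Pi / G2)))
       * ((c1 * (A / G2) / (c2 * (G2 * Gb * Hj))) * (c1 * (Pj / G2)))"
  using assms by (simp add: field_simps power_def)

context ahl begin

lemma main_bound:
  assumes x0: "x0 \<in> CC" and r: "0 < r" "2 * r < r0"
    and ij: "1 \<le> j" "j < i" and small: "1 / real b ^ (j - 1) < r / 4"
    and rhoi: "\<rho>i \<le> 1 / real b ^ i / 2" and rhoj: "\<rho>j \<le> 1 / real b ^ j / 2"
  shows "hm ((ball x0 r \<inter> (\<Union>c\<in>P i. ball c \<rho>i)) \<inter> (ball x0 r \<inter> (\<Union>c\<in>P j. ball c \<rho>j)))
     \<le> ennreal Kc / hm (ball x0 r) * hm (ball x0 r \<inter> (\<Union>c\<in>P i. ball c \<rho>i)) * hm (ball x0 r \<inter> (\<Union>c\<in>P j. ball c \<rho>j))"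
proof (cases "0 < \<rho>i \<and> 0 < \<rho>j")
  case False
  then have "\<rho>i \<le> 0 \<or> \<rho>j \<le> 0" by auto
  then have "(\<Union>c\<in>P i. ball c \<rho>i) = {} \<or> (\<Union>c\<in>P j. ball c \<rho>j) = {}" by (auto simp: ball_empty)
  then have "((ball x0 r \<inter> (\<Union>c\<in>P i. ball c \<rho>i)) \<inter> (ball x0 r \<inter> (\<Union>c\<in>P j. ball c \<rho>j))) \<inter> CC = {}" by blast
  then show ?thesis by (simp add: hm_empty)
next
  case True
  then have rp: "0 < \<rho>i" "0 < \<rho>j" by auto
  have "1 / real b ^ (i - 1) \<le> 1 / real b ^ (j - 1)"
    using inv_pow_anti[of b "j - 1" "i - 1"] b2 ij by auto
  then have small_i: "1 / real b ^ (i - 1) < r / 4" using small by linarith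
  define Li where "Li = (c1 * (r / 2) powr \<gamma> / (c2 * (2 / real b ^ (i - 1)) powr \<gamma>)) * (c1 * (\<rho>i / 2) powr \<gamma>)"
  define Lj where "Lj = (c1 * (r / 2) powr \<gamma> / (c2 * (2 / real b ^ (j - 1)) powr \<gamma>)) * (c1 * (\<rho>j / 2) powr \<gamma>)"
  have lowi: "ennreal Li \<le> hm (ball x0 r \<inter> (\<Union>c\<in>P i. ball c \<rho>i))"
    unfolding Li_def by (rule lower[OF x0 r _ small_i rp(1) rhoi]) (use ij in auto)
  have lowj: "ennreal Lj \<le> hm (ball x0 r \<inter> (\<Union>c\<in>P j. ball c \<rho>j))"
    unfolding Lj_def by (rule lower[OF x0 r _ small rp(2) rhoj]) (use ij in auto)
  have Lpos: "0 \<le> Li" "0 \<le> Lj" unfolding Li_def Lj_def using c1 c2 by auto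
  have upp: "hm ((ball x0 r \<inter> (\<Union>c\<in>P i. ball c \<rho>i)) \<inter> (ball x0 r \<inter> (\<Union>c\<in>P j. ball c \<rho>j)))
     \<le> ennreal ((c2 * (2 * r) powr \<gamma> / (c1 * (1 / real b ^ j / 4) powr \<gamma>))
             * (c2 * (3 * \<rho>j) powr \<gamma> / (c1 * (1 / real b ^ i / 4) powr \<gamma>)) * (c2 * \<rho>i powr \<gamma>))"
    by (rule upper[OF x0 r ij small rp(1) rhoi rp(2) rhoj])
  have rr0: "r < r0" using r by simp
  have muB: "ennreal (c1 * r powr \<gamma>) \<le> hm (ball x0 r)" "hm (ball x0 r) \<le> ennreal (c2 * r powr \<gamma>)"
    using ahl x0 r rr0 by auto
  then obtain m where m: "hm (ball x0 r) = ennreal m" "0 \<le> m"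
    by (metis ennreal_cases ennreal_less_top leD top_greatest order.not_eq_order_implies_strict)
  have pr: "0 < c1 * r powr \<gamma>" "0 < c2 * r powr \<gamma>" using c1 c2 r by auto
  have "c1 * r powr \<gamma> \<le> m" using muB(1) m by (simp add: ennreal_le_iff)
  moreover have "m \<le> c2 * r powr \<gamma>" using muB(2) m pr by (simp add: ennreal_le_iff)
  ultimately have m2: "0 < m" "m \<le> c2 * r powr \<gamma>" using pr by auto
  have "ennreal (Kc / (c2 * r powr \<gamma>) * Li * Lj) \<le> ennreal (Kc / m * Li * Lj)"
  proof (rule ennreal_leI, intro mult_right_mono)
    show "Kc / (c2 * r powr \<gamma>) \<le> Kc / m" using m2 Kc_pos by (intro divide_left_mono) auto
  qed (use Lpos in auto)
  also have "\<dots> = ennreal Kc / ennreal m * ennreal Li * ennreal Lj"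
  proof -
    have "ennreal (Kc / m * Li * Lj) = ennreal (Kc / m) * ennreal Li * ennreal Lj"
      using m2 Kc_pos Lpos by (simp add: ennreal_mult del: times_divide_eq_left)
    also have "ennreal (Kc / m) = ennreal Kc / ennreal m" using m2 Kc_pos by (simp add: divide_ennreal)
    finally show ?thesis .
  qed
  also have "\<dots> \<le> ennreal Kc / hm (ball x0 r) * hm (ball x0 r \<inter> (\<Union>c\<in>P i. ball c \<rho>i)) * hm (ball x0 r \<inter> (\<Union>c\<in>P j. ball c \<rho>j))"
    unfolding m(1) by (intro mult_mono lowi lowj) auto
  finally have rhs: "ennreal (Kc / (c2 * r powr \<gamma>) * Li * Lj) \<le> ennreal Kc / hm (ball x0 r) * hm (ball x0 r \<inter> (\<Union>c\<in>P i. ball c \<rho>i)) * hm (ball x0 r \<inter> (\<Union>c\<in>P j. ball c \<rho>j))" .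
  have hi1: "2 / real b ^ (i - 1) = 2 * real b * (1 / real b ^ i)"
  proof -
    obtain i' where "i = Suc i'" using ij by (cases i) auto
    then show ?thesis using b2 by simp
  qed
  have hj1: "2 / real b ^ (j - 1) = 2 * real b * (1 / real b ^ j)"
  proof -
    obtain j' where "j = Suc j'" using ij by (cases j) auto
    then show ?thesis using b2 by simp
  qed
  have "(c2 * (2 * r) powr \<gamma> / (c1 * (1 / real b ^ j / 4) powr \<gamma>))
             * (c2 * (3 * \<rho>j) powr \<gamma> / (c1 * (1 / real b ^ i / 4) powr \<gamma>)) * (c2 * \<rho>i powr \<gamma>)
      = Kc / (c2 * r powr \<gamma>) * Li * Lj"
    unfolding Li_def Lj_def Kc_def hi1 hj1 using r rp b2
    apply (simp only: powr_mult powr_divide mult_nonneg_nonneg zero_le_numeral of_nat_0_le_iff less_imp_le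
         divide_nonneg_nonneg zero_le_power zero_le_one)
    apply (rule alg_id)
    using c1 c2 r rp b2 by auto
  then show ?thesis using upp rhs by simp
qed

end


theorem lemma4p3:
  fixes b :: nat and D :: "nat set" and a :: "nat \<Rightarrow> nat" and \<psi> :: "nat \<Rightarrow> real"
    and r0 :: real and x0 :: real and r :: real
  defines "\<gamma> \<equiv> ln (real (card D)) / ln (real b)"
  defines "\<mu> \<equiv> (\<lambda>X. hausdorff_measure \<gamma> (X \<inter> cantor_set b D))"
  defines "I \<equiv> {i. \<exists>n\<ge>1. a n = i}"
  assumes b3: "b \<ge> 3"
    and D_sub: "D \<subseteq> {0..<b}" and D_card: "2 \<le> card D" "card D \<le> b - 1"
    and r0_pos: "r0 > 0"
    and ahlfors: "\<exists>c1 c2. 0 < c1 \<and> 0 < c2 \<and> (\<forall>x \<in> cantor_set b D. \<forall>\<rho>. 0 < \<rho> \<and> \<rho> < r0 \<longrightarrow>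
                   ennreal (c1 * \<rho> powr \<gamma>) \<le> \<mu> (ball x \<rho>) \<and> \<mu> (ball x \<rho>) \<le> ennreal (c2 * \<rho> powr \<gamma>))"
    and a_pos: "\<forall>n\<ge>1. a n \<ge> 1"
    and a_mono: "\<forall>m n. 1 \<le> m \<and> m \<le> n \<longrightarrow> a m \<le> a n"
    and a_unbdd: "\<forall>M. \<exists>n\<ge>1. a n > M"
    and psi_pos: "\<forall>n\<ge>1. \<psi> n > 0"
    and psi_small: "\<forall>i\<in>I. psiA a \<psi> i \<le> (1 / real b ^ i) / 2"
    and x0C: "x0 \<in> cantor_set b D"
    and r_pos: "0 < r" and r_small: "r < r0 / 2"
  shows "\<exists>T::nat. \<forall>t0\<ge>T. 1 / real b ^ t0 < r \<longrightarrow>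
           (\<exists>K>0. \<forall>i\<in>I. \<forall>j\<in>I. t0 < j \<and> j < i \<longrightarrow>
              \<mu> ((ball x0 r \<inter> LS_star b D a \<psi> i) \<inter> (ball x0 r \<inter> LS_star b D a \<psi> j))
                \<le> ennreal K / \<mu> (ball x0 r) * \<mu> (ball x0 r \<inter> LS_star b D a \<psi> i)
                   * \<mu> (ball x0 r \<inter> LS_star b D a \<psi> j))"
proof -
  obtain c1 c2 where c12: "0 < c1" "0 < c2" and ah: "\<forall>x \<in> cantor_set b D. \<forall>\<rho>. 0 < \<rho> \<and> \<rho> < r0 \<longrightarrow>
                   ennreal (c1 * \<rho> powr \<gamma>) \<le> \<mu> (ball x \<rho>) \<and> \<mu> (ball x \<rho>) \<le> ennreal (c2 * \<rho> powr \<gamma>)"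
    using ahlfors by blast
  have Dfin: "finite D" using D_sub finite_subset by blast
  have Dne: "D \<noteq> {}" using D_card by auto
  have g0: "\<gamma> \<ge> 0" unfolding \<gamma>_def using D_card b3 by (intro divide_nonneg_nonneg) auto
  have b2: "b \<ge> 2" using b3 by simp
  interpret A: ahl b D \<gamma> r0 c1 c2
    using b2 D_card D_sub Dfin Dne g0 c12 ah unfolding \<mu>_def by unfold_locales auto
  have "1 / real b < 1" using b3 by simp
  then obtain T where T: "(1 / real b) ^ T < r / 4" using real_arch_pow_inv[of "r / 4" "1 / real b"] r_pos by auto
  show ?thesis
  proof (intro exI[of _ T] allI impI exI[of _ A.Kc] conjI ballI A.Kc_pos)
    fix t0 i j assume t0: "T \<le> t0" and i: "i \<in> I" and j: "j \<in> I" and ij: "t0 < j \<and> j < i"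
    have LS: "LS_star b D a \<psi> k = (\<Union>c\<in>A.P k. ball c (psiA a \<psi> k - dl b D k))" for k
      unfolding LS_star_def A.P_def by auto
    have small: "1 / real b ^ (j - 1) < r / 4"
    proof -
      have "1 / real b ^ (j - 1) \<le> 1 / real b ^ T" using inv_pow_anti[of b T "j - 1"] b3 t0 ij by auto
      then show ?thesis using T by (simp add: power_one_over)
    qed
    have rho: "psiA a \<psi> k - dl b D k \<le> 1 / real b ^ k / 2" if "k \<in> I" for k
      using psi_small that dl_nonneg[of b D k] b3 by fastforce
    show "\<mu> ((ball x0 r \<inter> LS_star b D a \<psi> i) \<inter> (ball x0 r \<inter> LS_star b D a \<psi> j))
        \<le> ennreal A.Kc / \<mu> (ball x0 r) * \<mu> (ball x0 r \<inter> LS_star b D a \<psi> i) * \<mu> (ball x0 r \<inter> LS_star b D a \<psi> j)"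
      unfolding \<mu>_def LS
      by (rule A.main_bound[OF x0C r_pos _ _ _ small rho[OF i] rho[OF j]]) (use r_small ij in auto)
  qed
qed

end
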